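(* Let $X$ be a real Hilbert space, let $m\ge2$ be an integer, $I=\{1,\dots,m\}$, let $(R_i)_{i\in I}$ be operators $X\to X$, let $r\in I$, let $(\alpha_i)_{i\in I}$ be reals with $\alpha_i\in\left]0,1\right[$ for $i\in I\setminus\{r\}$ and $\alpha_r>0$, let $\delta_i\in\mathbb{R}\setminus\{0\}$, and suppose that for each $i\in I$, $\tfrac1{\delta_i}R_i$ is $\alpha_i$-conically nonexpansive. Set $R=R_m\cdots R_1$ and $$\bar\alpha=\frac{\sum_{i\in I,\,i\neq r}\frac{\alpha_i}{1-\alpha_i}}{1+\sum_{i\in I,\,i\neq r}\frac{\alpha_i}{1-\alpha_i}}.$$ Suppose $\alpha_r\bar\alpha<1$, and set $$\alpha=\begin{cases}\dfrac{\sum_{i=1}^m\frac{\alpha_i}{1-\alpha_i}}{1+\sum_{i=1}^m\frac{\alpha_i}{1-\alpha_i}},&\alpha_r\neq1;\\ 1,&\alpha_r=1.\end{cases}$$ Then there exists a nonexpansive $N\colon X\to X$ such that $R=\delta_m\cdots\delta_1\big((1-\alpha)\mathrm{Id}+\alpha N\big)$.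
   Context: For $\alpha>0$, an operator $T\colon X\to X$ is $\alpha$-conically nonexpansive if there exists a nonexpansive ($1$-Lipschitz) $N\colon X\to X$ with $T=(1-\alpha)\mathrm{Id}+\alpha N$. *)

theory Defs
  imports "HOL-Analysis.Analysis"
begin

definition nonexpansive :: "('a::real_normed_vector \<Rightarrow> 'a) \<Rightarrow> bool" where
  "nonexpansive N \<longleftrightarrow> 1-lipschitz_on UNIV N"

definition conically_nonexpansive :: "real \<Rightarrow> ('a::real_normed_vector \<Rightarrow> 'a) \<Rightarrow> bool" where
  "conically_nonexpansive \<alpha> T \<longleftrightarrow> \<alpha> > 0 \<and>
     (\<exists>N. nonexpansive N \<and> T = (\<lambda>x. (1 - \<alpha>) *\<^sub>R x + \<alpha> *\<^sub>R N x))"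

fun comp_ops :: "(nat \<Rightarrow> 'a \<Rightarrow> 'a) \<Rightarrow> nat \<Rightarrow> 'a \<Rightarrow> 'a" where
  "comp_ops R 0 = id"
| "comp_ops R (Suc k) = R (Suc k) \<circ> comp_ops R k"

end

theory Submission
  imports Defs
begin

lemma sq_lin:
  fixes x y :: "'a::real_inner"
  shows "(norm (a *\<^sub>R x + b *\<^sub>R y))\<^sup>2 = a^2 * (x \<bullet> x) + 2*a*b*(x \<bullet> y) + b^2 * (y \<bullet> y)"
  unfolding power2_norm_eq_inner by (simp add: inner_add_left inner_add_right inner_commute power2_eq_square algebra_simps)

definition cq :: "real \<Rightarrow> ('a::real_inner \<Rightarrow> 'a) \<Rightarrow> bool" where
  "cq c T \<longleftrightarrow> (\<forall>x y. (norm (T x - T y))\<^sup>2 \<le> (norm (x - y))\<^sup>2 - c * (norm ((x - y) - (T x - T y)))\<^sup>2)"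

lemma vec1:
  fixes u w :: "'a::real_inner"
  assumes "\<alpha> > 0" "norm w \<le> norm u"
  shows "(norm ((1-\<alpha>) *\<^sub>R u + \<alpha> *\<^sub>R w))\<^sup>2 \<le> (norm u)\<^sup>2 - ((1-\<alpha>)/\<alpha>) * (norm (\<alpha> *\<^sub>R u + (-\<alpha>) *\<^sub>R w))\<^sup>2"
proof -
  have W: "w \<bullet> w \<le> u \<bullet> u" using assms(2)
    by (metis norm_ge_zero power2_norm_eq_inner power_mono)
  have nu: "(norm u)\<^sup>2 = u \<bullet> u" by (simp add: power2_norm_eq_inner)
  have e: "(u \<bullet> u) - ((1-\<alpha>)/\<alpha>) * (\<alpha>^2 * (u \<bullet> u) + 2*\<alpha>*(-\<alpha>)*(u \<bullet> w) + (-\<alpha>)^2 * (w \<bullet> w))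
     - ((1-\<alpha>)^2 * (u \<bullet> u) + 2*(1-\<alpha>)*\<alpha>*(u \<bullet> w) + \<alpha>^2 * (w \<bullet> w)) = \<alpha> * (u \<bullet> u - w \<bullet> w)"
    using assms(1) by (simp add: field_simps power2_eq_square)
  have "\<alpha> * (u \<bullet> u - w \<bullet> w) \<ge> 0" using assms(1) W by simp
  then show ?thesis using e unfolding sq_lin nu by linarith
qed

lemma vec2:
  fixes u p :: "'a::real_inner"
  assumes "\<alpha> > 0" "(norm p)\<^sup>2 \<le> (norm u)\<^sup>2 - ((1-\<alpha>)/\<alpha>) * (norm (u - p))\<^sup>2"
  shows "norm ((1/\<alpha>) *\<^sub>R (p - (1-\<alpha>) *\<^sub>R u)) \<le> norm u"
proof -
  have h: "p \<bullet> p \<le> u \<bullet> u - ((1-\<alpha>)/\<alpha>) * (u \<bullet> u - 2 * (u \<bullet> p) + p \<bullet> p)"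
  proof -
    have "(norm (u - p))\<^sup>2 = u \<bullet> u - 2 * (u \<bullet> p) + p \<bullet> p"
      unfolding power2_norm_eq_inner by (simp add: inner_diff_left inner_diff_right inner_commute)
    then show ?thesis using assms(2) by (simp add: power2_norm_eq_inner)
  qed
  have h2: "p \<bullet> p \<le> (2*\<alpha>-1) * (u \<bullet> u) + 2*(1-\<alpha>)*(u \<bullet> p)"
  proof -
    have "\<alpha> * (p \<bullet> p) \<le> \<alpha> * (u \<bullet> u - ((1-\<alpha>)/\<alpha>) * (u \<bullet> u - 2 * (u \<bullet> p) + p \<bullet> p))"
      using h assms(1) by simp
    also have "\<dots> = \<alpha> * (u \<bullet> u) - (1-\<alpha>) * (u \<bullet> u - 2 * (u \<bullet> p) + p \<bullet> p)"
      using assms(1) by (simp add: field_simps)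
    finally show ?thesis by (simp add: algebra_simps)
  qed
  have "(norm ((1/\<alpha>) *\<^sub>R (p - (1-\<alpha>) *\<^sub>R u)))\<^sup>2 = (1/\<alpha>)^2 * (p \<bullet> p - 2*(1-\<alpha>)*(u \<bullet> p) + (1-\<alpha>)^2 * (u \<bullet> u))"
  proof -
    have "(norm (p - (1-\<alpha>) *\<^sub>R u))\<^sup>2 = p \<bullet> p - 2*(1-\<alpha>)*(u \<bullet> p) + (1-\<alpha>)^2 * (u \<bullet> u)"
      unfolding power2_norm_eq_inner by (simp add: inner_diff_left inner_diff_right inner_commute power2_eq_square algebra_simps)
    then show ?thesis by (simp only: norm_scaleR power_mult_distrib power2_abs)
  qed
  also have "\<dots> \<le> (1/\<alpha>)^2 * (\<alpha>^2 * (u \<bullet> u))"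
  proof (rule mult_left_mono)
    have e1: "(1-\<alpha>)^2 * (u \<bullet> u) = u \<bullet> u - 2*(\<alpha>*(u \<bullet> u)) + \<alpha>^2 * (u \<bullet> u)"
      by (simp add: power2_eq_square algebra_simps)
    have e2: "2*(1-\<alpha>)*(u \<bullet> p) = 2*(u \<bullet> p) - 2*(\<alpha>*(u \<bullet> p))" by (simp add: algebra_simps)
    have e3: "(2*\<alpha>-1) * (u \<bullet> u) = 2*(\<alpha>*(u \<bullet> u)) - u \<bullet> u" by (simp add: algebra_simps)
    show "p \<bullet> p - 2*(1-\<alpha>)*(u \<bullet> p) + (1-\<alpha>)^2 * (u \<bullet> u) \<le> \<alpha>^2 * (u \<bullet> u)"
      using h2 e1 e2 e3 by linarith
  qed simp
  also have "\<dots> = u \<bullet> u" using assms(1) by (simp add: power2_eq_square)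
  also have "\<dots> = (norm u)\<^sup>2" by (simp add: power2_norm_eq_inner)
  finally show ?thesis using power2_le_imp_le norm_ge_zero by blast
qed

lemma vec4:
  fixes v1 v2 :: "'a::real_inner"
  assumes "k1 * k2 * (k1 + k2) > 0"
  shows "(1/(k1+k2)) * (norm (v1 + v2))\<^sup>2 \<le> (1/k1) * (norm v1)\<^sup>2 + (1/k2) * (norm v2)\<^sup>2"
proof -
  have nz: "k1 \<noteq> 0" "k2 \<noteq> 0" "k1 + k2 \<noteq> 0" using assms by auto
  have "(1/k1) * (norm v1)\<^sup>2 + (1/k2) * (norm v2)\<^sup>2 - (1/(k1+k2)) * (norm (v1 + v2))\<^sup>2
     = (norm (k2 *\<^sub>R v1 - k1 *\<^sub>R v2))\<^sup>2 / (k1 * k2 * (k1 + k2))"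
    using nz unfolding power2_norm_eq_inner by (simp add: inner_diff_left inner_diff_right inner_add_left inner_add_right inner_commute field_simps power2_eq_square)
  moreover have "(norm (k2 *\<^sub>R v1 - k1 *\<^sub>R v2))\<^sup>2 / (k1 * k2 * (k1 + k2)) \<ge> 0"
    using assms by simp
  ultimately show ?thesis by linarith
qed


lemma L1:
  fixes T :: "'a::real_inner \<Rightarrow> 'a"
  assumes "conically_nonexpansive \<alpha> T"
  shows "cq ((1-\<alpha>)/\<alpha>) T"
proof -
  from assms obtain N where a: "\<alpha> > 0" and N: "nonexpansive N" and T: "T = (\<lambda>x. (1 - \<alpha>) *\<^sub>R x + \<alpha> *\<^sub>R N x)"
    unfolding conically_nonexpansive_def by blast
  show ?thesis unfolding cq_def
  proof (intro allI)
    fix x y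
    have nw: "norm (N x - N y) \<le> norm (x - y)"
      using lipschitz_onD[OF N[unfolded nonexpansive_def], of x y] by (simp add: dist_norm)
    have e1: "T x - T y = (1-\<alpha>) *\<^sub>R (x - y) + \<alpha> *\<^sub>R (N x - N y)"
      unfolding T by (simp add: algebra_simps)
    have e2: "(x - y) - (T x - T y) = \<alpha> *\<^sub>R (x - y) + (-\<alpha>) *\<^sub>R (N x - N y)"
      unfolding T by (simp add: algebra_simps)
    show "(norm (T x - T y))\<^sup>2 \<le> (norm (x - y))\<^sup>2 - (1-\<alpha>)/\<alpha> * (norm ((x - y) - (T x - T y)))\<^sup>2"
      by (subst e2, subst e1, rule vec1[OF a nw])
  qed
qed

lemma L2:
  fixes T :: "'a::real_inner \<Rightarrow> 'a"
  assumes a: "\<alpha> > 0" and q: "cq ((1-\<alpha>)/\<alpha>) T"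
  shows "\<exists>N. nonexpansive N \<and> T = (\<lambda>x. (1 - \<alpha>) *\<^sub>R x + \<alpha> *\<^sub>R N x)"
proof -
  define N where "N x = (1/\<alpha>) *\<^sub>R (T x - (1-\<alpha>) *\<^sub>R x)" for x
  have "T = (\<lambda>x. (1 - \<alpha>) *\<^sub>R x + \<alpha> *\<^sub>R N x)"
    using a by (auto simp: N_def)
  moreover have "nonexpansive N" unfolding nonexpansive_def
  proof (rule lipschitz_onI)
    fix x y :: 'a
    have e: "N x - N y = (1/\<alpha>) *\<^sub>R ((T x - T y) - (1-\<alpha>) *\<^sub>R (x - y))"
      by (simp add: N_def algebra_simps)
    have "norm (N x - N y) \<le> norm (x - y)"
      unfolding e by (rule vec2[OF a]) (use q in \<open>simp add: cq_def\<close>)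
    then show "dist (N x) (N y) \<le> 1 * dist x y" by (simp add: dist_norm)
  qed simp
  ultimately show ?thesis by blast
qed

lemma L3:
  fixes G :: "'a::real_inner \<Rightarrow> 'a"
  assumes p: "p \<noteq> 0" and q: "cq c G"
  shows "cq c (\<lambda>y. (1/p) *\<^sub>R G (p *\<^sub>R y))"
  unfolding cq_def
proof (intro allI)
  fix x y :: 'a
  have h: "(norm (G (p *\<^sub>R x) - G (p *\<^sub>R y)))\<^sup>2 \<le> (norm (p *\<^sub>R x - p *\<^sub>R y))\<^sup>2
     - c * (norm ((p *\<^sub>R x - p *\<^sub>R y) - (G (p *\<^sub>R x) - G (p *\<^sub>R y))))\<^sup>2"
    using q by (simp add: cq_def)
  have e1: "(1/p) *\<^sub>R G (p *\<^sub>R x) - (1/p) *\<^sub>R G (p *\<^sub>R y) = (1/p) *\<^sub>R (G (p *\<^sub>R x) - G (p *\<^sub>R y))"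
    by (simp add: algebra_simps)
  have e2: "(x - y) - ((1/p) *\<^sub>R G (p *\<^sub>R x) - (1/p) *\<^sub>R G (p *\<^sub>R y)) =
     (1/p) *\<^sub>R ((p *\<^sub>R x - p *\<^sub>R y) - (G (p *\<^sub>R x) - G (p *\<^sub>R y)))"
    using p by (simp add: algebra_simps)
  have e3: "x - y = (1/p) *\<^sub>R (p *\<^sub>R x - p *\<^sub>R y)" using p by (simp add: algebra_simps)
  have sc: "\<And>z::'a. (norm ((1/p) *\<^sub>R z))\<^sup>2 = (1/p)^2 * (norm z)\<^sup>2"
    by (simp only: norm_scaleR power_mult_distrib power2_abs)
  have "(1/p)^2 * (norm (G (p *\<^sub>R x) - G (p *\<^sub>R y)))\<^sup>2 \<le> (1/p)^2 * ((norm (p *\<^sub>R x - p *\<^sub>R y))\<^sup>2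
     - c * (norm ((p *\<^sub>R x - p *\<^sub>R y) - (G (p *\<^sub>R x) - G (p *\<^sub>R y))))\<^sup>2)"
    using h by (rule mult_left_mono) simp
  then show "(norm ((1/p) *\<^sub>R G (p *\<^sub>R x) - (1/p) *\<^sub>R G (p *\<^sub>R y)))\<^sup>2 \<le> (norm (x - y))\<^sup>2 - c *
      (norm ((x - y) - ((1/p) *\<^sub>R G (p *\<^sub>R x) - (1/p) *\<^sub>R G (p *\<^sub>R y))))\<^sup>2"
  proof -
    have n1: "(norm (x - y))\<^sup>2 = (1/p)^2 * (norm (p *\<^sub>R x - p *\<^sub>R y))\<^sup>2"
      by (subst e3) (rule sc)
    have n2: "(norm ((x - y) - ((1/p) *\<^sub>R G (p *\<^sub>R x) - (1/p) *\<^sub>R G (p *\<^sub>R y))))\<^sup>2 =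
       (1/p)^2 * (norm ((p *\<^sub>R x - p *\<^sub>R y) - (G (p *\<^sub>R x) - G (p *\<^sub>R y))))\<^sup>2"
      by (subst e2) (rule sc)
    have n3: "(norm ((1/p) *\<^sub>R G (p *\<^sub>R x) - (1/p) *\<^sub>R G (p *\<^sub>R y)))\<^sup>2 = (1/p)^2 * (norm (G (p *\<^sub>R x) - G (p *\<^sub>R y)))\<^sup>2"
      by (subst e1) (rule sc)
    assume H: "(1/p)^2 * (norm (G (p *\<^sub>R x) - G (p *\<^sub>R y)))\<^sup>2 \<le> (1/p)^2 * ((norm (p *\<^sub>R x - p *\<^sub>R y))\<^sup>2
     - c * (norm ((p *\<^sub>R x - p *\<^sub>R y) - (G (p *\<^sub>R x) - G (p *\<^sub>R y))))\<^sup>2)"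
    show ?thesis unfolding n1 n2 n3 using H by (simp add: algebra_simps)
  qed
qed

lemma L4:
  fixes T1 T2 :: "'a::real_inner \<Rightarrow> 'a"
  assumes q1: "cq (1/k1) T1" and q2: "cq (1/k2) T2" and k: "k1 * k2 * (k1 + k2) > 0"
  shows "cq (1/(k1+k2)) (T2 \<circ> T1)"
  unfolding cq_def
proof (intro allI)
  fix x y :: 'a
  have h1: "(norm (T1 x - T1 y))\<^sup>2 \<le> (norm (x - y))\<^sup>2 - 1/k1 * (norm ((x - y) - (T1 x - T1 y)))\<^sup>2"
    using q1 by (simp add: cq_def)
  have h2: "(norm (T2 (T1 x) - T2 (T1 y)))\<^sup>2 \<le> (norm (T1 x - T1 y))\<^sup>2 - 1/k2 * (norm ((T1 x - T1 y) - (T2 (T1 x) - T2 (T1 y))))\<^sup>2"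
    using q2 by (simp add: cq_def)
  have e: "(x - y) - (T2 (T1 x) - T2 (T1 y)) = ((x - y) - (T1 x - T1 y)) + ((T1 x - T1 y) - (T2 (T1 x) - T2 (T1 y)))"
    by (simp add: algebra_simps)
  note h3 = vec4[OF k, of "(x - y) - (T1 x - T1 y)" "(T1 x - T1 y) - (T2 (T1 x) - T2 (T1 y))"]
  show "(norm ((T2 \<circ> T1) x - (T2 \<circ> T1) y))\<^sup>2 \<le> (norm (x - y))\<^sup>2 - 1/(k1+k2) * (norm ((x - y) - ((T2 \<circ> T1) x - (T2 \<circ> T1) y)))\<^sup>2"
    unfolding o_def e using h1 h2 h3 by linarith
qed

lemma L5:
  assumes "c \<ge> 0" "cq c T" shows "cq 0 T"
  using assms unfolding cq_def
  by (smt (verit) mult_nonneg_nonneg zero_le_power2)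

lemma L6:
  assumes "cq 0 T1" "cq 0 T2" shows "cq 0 (T2 \<circ> T1)"
  using assms unfolding cq_def by (simp, meson order_trans)

lemma cq_id: "cq c id"
  unfolding cq_def by simp

theorem mainTheorem10:
  fixes R :: "nat \<Rightarrow> 'a::{real_inner, complete_space} \<Rightarrow> 'a"
    and m r :: nat and a \<delta> :: "nat \<Rightarrow> real"
  assumes m2: "m \<ge> 2"
    and r: "r \<in> {1..m}"
    and a01: "\<forall>i\<in>{1..m} - {r}. 0 < a i \<and> a i < 1"
    and ar: "a r > 0"
    and \<delta>nz: "\<forall>i\<in>{1..m}. \<delta> i \<noteq> 0"
    and cone: "\<forall>i\<in>{1..m}. conically_nonexpansive (a i) (\<lambda>x. (1 / \<delta> i) *\<^sub>R R i x)"
    and abar: "a r * ((\<Sum>i\<in>{1..m} - {r}. a i / (1 - a i)) /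
                     (1 + (\<Sum>i\<in>{1..m} - {r}. a i / (1 - a i)))) < 1"
  shows "\<exists>N. nonexpansive N \<and>
    (let \<alpha> = (if a r \<noteq> 1
                then (\<Sum>i=1..m. a i / (1 - a i)) / (1 + (\<Sum>i=1..m. a i / (1 - a i)))
                else 1)
     in comp_ops R m = (\<lambda>x. (\<Prod>i=1..m. \<delta> i) *\<^sub>R ((1 - \<alpha>) *\<^sub>R x + \<alpha> *\<^sub>R N x)))"
  proof -
  define G where "G i = (\<lambda>x. (1/\<delta> i) *\<^sub>R R i x)" for i
  define P where "P k = (\<Prod>i=1..k. \<delta> i)" for k
  define T where "T i = (\<lambda>y. (1/P (i-1)) *\<^sub>R G i (P (i-1) *\<^sub>R y))" for i
  define \<kappa> where "\<kappa> i = a i / (1 - a i)" for i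
  define K where "K k = (\<Sum>i=1..k. \<kappa> i)" for k
  define S where "S = K m"
  have Pnz: "P k \<noteq> 0" if "k \<le> m" for k
    using that \<delta>nz by (auto simp: P_def)
  have PS: "P (Suc k) = \<delta> (Suc k) * P k" for k
    unfolding P_def by (rule prod.nat_ivl_Suc') simp
  have comp: "comp_ops R k = (\<lambda>x. P k *\<^sub>R comp_ops T k x)" if "k \<le> m" for k
    using that
  proof (induction k)
    case 0 then show ?case by (simp add: P_def)
  next
    case (Suc k)
    have d: "\<delta> (Suc k) \<noteq> 0" using Suc.prems \<delta>nz by auto
    have p: "P k \<noteq> 0" using Suc.prems Pnz by auto
    show ?case
    proof
      fix x
      have "comp_ops R (Suc k) x = R (Suc k) (P k *\<^sub>R comp_ops T k x)"
        using Suc by simp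
      also have "\<dots> = P (Suc k) *\<^sub>R T (Suc k) (comp_ops T k x)"
        using d p by (simp add: T_def G_def PS)
      finally show "comp_ops R (Suc k) x = P (Suc k) *\<^sub>R comp_ops T (Suc k) x" by simp
    qed
  qed
  have cqT: "cq ((1 - a i)/a i) (T i)" if i: "i \<in> {1..m}" for i
  proof -
    have "cq ((1 - a i)/a i) (G i)"
      using L1 cone i unfolding G_def by blast
    moreover have "P (i-1) \<noteq> 0" using i Pnz by auto
    ultimately show ?thesis unfolding T_def by (intro L3)
  qed
  have apos: "a i > 0" if "i \<in> {1..m}" for i
    using that a01 ar by (cases "i = r") auto
  have cT: "comp_ops T (Suc k) = T (Suc k) \<circ> comp_ops T k" for k by simp
  show ?thesis
  proof (cases "a r = 1")
    case True
    have "cq 0 (T i)" if i: "i \<in> {1..m}" for i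
    proof (rule L5[OF _ cqT[OF i]])
      show "0 \<le> (1 - a i) / a i"
      proof (cases "i = r")
        case False
        then have "0 < a i" "a i < 1" using i a01 by auto
        then show ?thesis by simp
      qed (use True in simp)
    qed
    then have "cq 0 (comp_ops T k)" if "k \<le> m" for k
      using that
    proof (induction k)
      case 0 then show ?case using cq_id by (simp add: id_def)
    next
      case (Suc k) then show ?case unfolding cT by (intro L6) auto
    qed
    then have "cq ((1-1)/1) (comp_ops T m)" by simp
    from L2[OF _ this] obtain N where N: "nonexpansive N"
      and e: "comp_ops T m = (\<lambda>x. (1 - 1) *\<^sub>R x + 1 *\<^sub>R N x)" by auto
    show ?thesis using N e comp[of m] True by (auto simp: Let_def P_def)
  next
    case False
    have kinv: "(1 - a i)/a i = 1/\<kappa> i" if "i \<in> {1..m}" for i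
    proof -
      have "a i \<noteq> 1"
      proof (cases "i = r")
        case F: False
        have "a i < 1" using that F a01 by blast
        then show ?thesis by simp
      qed (use False in simp)
      then show ?thesis using apos[OF that] by (simp add: \<kappa>_def field_simps)
    qed
    have kpos: "\<kappa> i > 0" if "i \<in> {1..m} - {r}" for i
      using that a01 by (auto simp: \<kappa>_def)
    have K1: "K (Suc k) = K k + \<kappa> (Suc k)" for k
      unfolding K_def by (subst sum.nat_ivl_Suc') auto
    have Kbefore: "K k > 0" if "1 \<le> k" "k < r" for k
      unfolding K_def using that r by (intro sum_pos) (auto intro!: kpos)
    have Kall: "K k > 0" if "a r < 1" "1 \<le> k" "k \<le> m" for k
      unfolding K_def
    proof (rule sum_pos)
      fix i assume i: "i \<in> {1..k}"
      show "0 < \<kappa> i"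
      proof (cases "i = r")
        case True then show ?thesis using that ar by (simp add: \<kappa>_def)
      next
        case F: False then show ?thesis using i that by (intro kpos) auto
      qed
    qed (use that in auto)
    have Kle: "K k \<le> S" if "r \<le> k" "k \<le> m" for k
    proof -
      have "S = K k + (\<Sum>i=k+1..k+(m-k). \<kappa> i)"
        unfolding S_def K_def using that sum.ub_add_nat[of 1 k \<kappa> "m-k"] by simp
      moreover have "(\<Sum>i=k+1..k+(m-k). \<kappa> i) \<ge> 0"
        using that r by (intro sum_nonneg) (auto intro!: less_imp_le kpos)
      ultimately show ?thesis by linarith
    qed
    define \<kappa>' where "\<kappa>' = (\<Sum>i\<in>{1..m} - {r}. \<kappa> i)"
    have Ssplit: "S = \<kappa> r + \<kappa>'"
      unfolding S_def K_def \<kappa>'_def using r by (simp add: sum.remove)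
    have k'pos: "\<kappa>' \<ge> 0" unfolding \<kappa>'_def by (intro sum_nonneg) (auto intro!: less_imp_le kpos)
    have Sneg: "1 + S < 0" if ar1: "a r > 1"
    proof -
      have ab: "a r * (\<kappa>' / (1 + \<kappa>')) < 1" using abar unfolding \<kappa>'_def \<kappa>_def .
      then have "a r * \<kappa>' < 1 + \<kappa>'" using k'pos by (simp add: field_simps)
      moreover have "(1 + S) * (1 - a r) = 1 + \<kappa>' - a r * \<kappa>'"
        using ar1 unfolding Ssplit \<kappa>_def by (simp add: field_simps)
      ultimately have "(1 + S) * (1 - a r) > 0" by linarith
      then show ?thesis using ar1 by (simp add: zero_less_mult_iff)
    qed
    have krs: "\<kappa> r > 0" if "a r < 1" using that ar by (simp add: \<kappa>_def)
    have krn: "\<kappa> r < 0" if "a r > 1" using that ar by (simp add: \<kappa>_def divide_pos_neg)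
    have ind: "cq (1/K k) (comp_ops T k)" if "1 \<le> k" "k \<le> m" for k
      using that
    proof (induction k)
      case 0 then show ?case by simp
    next
      case (Suc k)
      show ?case
      proof (cases "k = 0")
        case True
        then show ?thesis using cqT[of 1] kinv[of 1] Suc.prems by (simp add: K_def)
      next
        case False
        have IH: "cq (1/K k) (comp_ops T k)" using Suc False by simp
        have q2: "cq (1/\<kappa> (Suc k)) (T (Suc k))" using cqT[of "Suc k"] kinv[of "Suc k"] Suc.prems by simp
        have pos: "K k * \<kappa> (Suc k) * (K k + \<kappa> (Suc k)) > 0"
        proof (cases "a r < 1")
          case True
          have "K k > 0" "K (Suc k) > 0" using Kall[OF True] False Suc.prems by auto
          moreover have "\<kappa> (Suc k) > 0" using True krs kpos[of "Suc k"] Suc.prems by (cases "Suc k = r") auto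
          ultimately show ?thesis using K1 by simp
        next
          case ar1: False
          then have ar1: "a r > 1" using \<open>a r \<noteq> 1\<close> by simp
          have S0: "S < 0" using Sneg[OF ar1] by simp
          consider "Suc k < r" | "Suc k = r" | "Suc k > r" by linarith
          then show ?thesis
          proof cases
            case 1
            have "K k > 0" "K (Suc k) > 0" using Kbefore False 1 by auto
            moreover have "\<kappa> (Suc k) > 0" using kpos[of "Suc k"] Suc.prems 1 by auto
            ultimately show ?thesis using K1 by simp
          next
            case 2
            have a1: "K k > 0" using Kbefore False 2 by auto
            have a2: "K (Suc k) < 0" using Kle[of "Suc k"] 2 Suc.prems S0 by auto
            have a3: "\<kappa> (Suc k) < 0" using krn[OF ar1] 2 by simp
            have "K k * \<kappa> (Suc k) < 0" using a1 a3 by (rule mult_pos_neg)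
            moreover have "K k + \<kappa> (Suc k) < 0" using a2 K1 by simp
            ultimately show ?thesis by (simp add: mult_neg_neg)
          next
            case 3
            have a1: "K k < 0" using Kle[of k] 3 Suc.prems S0 by auto
            have a2: "K (Suc k) < 0" using Kle[of "Suc k"] 3 Suc.prems S0 by auto
            have a3: "\<kappa> (Suc k) > 0" using kpos[of "Suc k"] Suc.prems 3 by auto
            have "K k * \<kappa> (Suc k) < 0" using a1 a3 by (rule mult_neg_pos)
            moreover have "K k + \<kappa> (Suc k) < 0" using a2 K1 by simp
            ultimately show ?thesis by (simp add: mult_neg_neg)
          qed
        qed
        have "cq (1/(K k + \<kappa> (Suc k))) (T (Suc k) \<circ> comp_ops T k)"
          by (rule L4[OF IH q2 pos])
        then show ?thesis using K1 by (simp add: o_def)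
      qed
    qed
    define \<alpha> where "\<alpha> = S / (1 + S)"
    have Sc: "S \<noteq> 0 \<and> 1 + S \<noteq> 0 \<and> \<alpha> > 0"
    proof (cases "a r < 1")
      case True
      then have "S > 0" using Kall[of m] m2 unfolding S_def by simp
      then show ?thesis by (simp add: \<alpha>_def)
    next
      case F: False
      then have "1 + S < 0" using Sneg \<open>a r \<noteq> 1\<close> by simp
      then show ?thesis unfolding \<alpha>_def by (simp add: divide_neg_neg)
    qed
    have "cq (1/S) (comp_ops T m)" using ind[of m] m2 unfolding S_def by simp
    moreover have "(1 - \<alpha>)/\<alpha> = 1/S" using Sc unfolding \<alpha>_def by (simp add: field_simps)
    ultimately have "cq ((1 - \<alpha>)/\<alpha>) (comp_ops T m)" by simp
    from L2[OF _ this] Sc obtain N where N: "nonexpansive N"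
      and e: "comp_ops T m = (\<lambda>x. (1 - \<alpha>) *\<^sub>R x + \<alpha> *\<^sub>R N x)" by auto
    have \<alpha>eq: "(\<Sum>i=1..m. a i / (1 - a i)) / (1 + (\<Sum>i=1..m. a i / (1 - a i))) = \<alpha>"
      unfolding \<alpha>_def S_def K_def \<kappa>_def ..
    show ?thesis using N e comp[of m] False unfolding Let_def \<alpha>eq by (auto simp: P_def)
  qed
qed

end
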